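(* Consider the Multiple-Path Orienteering Problem (MOP) with $M$ robots on a metric graph $G=(\mathcal{V},\mathcal{E})$: choose paths $\mathcal{Q}_1,\dots,\mathcal{Q}_M$, where $\mathcal{Q}_i$ starts at the given vertex $v_{s_i}$ and has cost $C(\mathcal{Q}_i)\le B$, so as to maximize the team reward $f(\{\mathcal{Q}_1,\dots,\mathcal{Q}_M\})=g\big(\bigcup_{i=1}^M\mathcal{Q}_i\big)$. Then there exists an optimal solution $\mathcal{Q}^*=\{\mathcal{Q}^*_1,\dots,\mathcal{Q}^*_M\}$ of the MOP whose paths do not overlap, i.e. $\mathcal{Q}^*_i\cap\mathcal{Q}^*_j=\emptyset$ for all $i\ne j$.
   Context: $G=(\mathcal{V},\mathcal{E})$ is a graph with metric edge weights. A path is an ordered sequence of non-repeated vertices, identified also with its set of vertices; its cost $C(\cdot)$ is the sum of the edge weights along it. The reward function $g:2^{\mathcal{V}}\to\mathbb{R}_{\ge 0}$ is normalized ($g(\mathcal{A})=0$ iff $\mathcal{A}=\emptyset$), monotone non-decreasing and submodular. Vertices visited by several robots contribute to the team reward only once. *)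

theory Defs
  imports Complex_Main
begin

definition metric_weights :: "'a set \<Rightarrow> ('a \<Rightarrow> 'a \<Rightarrow> real) \<Rightarrow> bool" where
  "metric_weights V w \<longleftrightarrow>
     (\<forall>x\<in>V. \<forall>y\<in>V. w x y \<ge> 0 \<and> w x y = w y x \<and> (w x y = 0 \<longleftrightarrow> x = y)) \<and>
     (\<forall>x\<in>V. \<forall>y\<in>V. \<forall>z\<in>V. w x z \<le> w x y + w y z)"

definition normalized :: "'a set \<Rightarrow> ('a set \<Rightarrow> real) \<Rightarrow> bool" where
  "normalized V g \<longleftrightarrow> (\<forall>A\<subseteq>V. g A \<ge> 0 \<and> (g A = 0 \<longleftrightarrow> A = {}))"

definition monotone_set_fun :: "'a set \<Rightarrow> ('a set \<Rightarrow> real) \<Rightarrow> bool" where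
  "monotone_set_fun V g \<longleftrightarrow> (\<forall>A B. A \<subseteq> B \<and> B \<subseteq> V \<longrightarrow> g A \<le> g B)"

definition submodular :: "'a set \<Rightarrow> ('a set \<Rightarrow> real) \<Rightarrow> bool" where
  "submodular V g \<longleftrightarrow> (\<forall>A B x. A \<subseteq> B \<and> B \<subseteq> V \<and> x \<in> V - B \<longrightarrow>
      g (insert x B) - g B \<le> g (insert x A) - g A)"

definition is_path :: "'a set \<Rightarrow> 'a list \<Rightarrow> bool" where
  "is_path V xs \<longleftrightarrow> xs \<noteq> [] \<and> distinct xs \<and> set xs \<subseteq> V"

definition path_cost :: "('a \<Rightarrow> 'a \<Rightarrow> real) \<Rightarrow> 'a list \<Rightarrow> real" where
  "path_cost w xs = sum_list (map (\<lambda>(x, y). w x y) (zip xs (tl xs)))"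

definition mop_feasible :: "'a set \<Rightarrow> ('a \<Rightarrow> 'a \<Rightarrow> real) \<Rightarrow> real \<Rightarrow> nat \<Rightarrow> (nat \<Rightarrow> 'a)
    \<Rightarrow> (nat \<Rightarrow> 'a list) \<Rightarrow> bool" where
  "mop_feasible V w B M s Q \<longleftrightarrow>
     (\<forall>i<M. is_path V (Q i) \<and> hd (Q i) = s i \<and> path_cost w (Q i) \<le> B)"

definition team_reward :: "('a set \<Rightarrow> real) \<Rightarrow> nat \<Rightarrow> (nat \<Rightarrow> 'a list) \<Rightarrow> real" where
  "team_reward g M Q = g (\<Union>i<M. set (Q i))"

definition mop_optimal :: "'a set \<Rightarrow> ('a \<Rightarrow> 'a \<Rightarrow> real) \<Rightarrow> ('a set \<Rightarrow> real) \<Rightarrow> real \<Rightarrow> nat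
    \<Rightarrow> (nat \<Rightarrow> 'a) \<Rightarrow> (nat \<Rightarrow> 'a list) \<Rightarrow> bool" where
  "mop_optimal V w g B M s Q \<longleftrightarrow> mop_feasible V w B M s Q \<and>
     (\<forall>Q'. mop_feasible V w B M s Q' \<longrightarrow> team_reward g M Q' \<le> team_reward g M Q)"

end

theory Submission
  imports Defs "HOL-Library.FuncSet"
begin

lemma pc_nil[simp]: "path_cost w [] = 0" by (simp add: path_cost_def)
lemma pc_one[simp]: "path_cost w [x] = 0" by (simp add: path_cost_def)
lemma pc_cons2[simp]: "path_cost w (x # y # ys) = w x y + path_cost w (y # ys)"
  by (simp add: path_cost_def)

lemma pc_skip:
  assumes "metric_weights V w" "x \<in> V" "y \<in> V" "set ys \<subseteq> V"
  shows "path_cost w (x # ys) \<le> w x y + path_cost w (y # ys)"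
proof (cases ys)
  case Nil then show ?thesis using assms by (simp add: metric_weights_def)
next
  case (Cons z zs)
  then have "w x z \<le> w x y + w y z" using assms by (simp add: metric_weights_def)
  then show ?thesis using Cons by simp
qed

lemma pc_filter:
  assumes "metric_weights V w"
  shows "x \<in> V \<Longrightarrow> set xs \<subseteq> V \<Longrightarrow> path_cost w (x # filter P xs) \<le> path_cost w (x # xs)"
proof (induction xs arbitrary: x)
  case Nil then show ?case by simp
next
  case (Cons y ys)
  show ?case
  proof (cases "P y")
    case True
    then show ?thesis using Cons.IH[of y] Cons.prems by simp
  next
    case False
    have "path_cost w (x # filter P ys) \<le> path_cost w (x # ys)" using Cons.IH[of x] Cons.prems by simp
    also have "\<dots> \<le> w x y + path_cost w (y # ys)" using pc_skip[OF assms, of x y ys] Cons.prems by simp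
    finally show ?thesis using False by simp
  qed
qed

theorem proposition1:
  fixes V :: "'a set" and w :: "'a \<Rightarrow> 'a \<Rightarrow> real" and g :: "'a set \<Rightarrow> real"
    and B :: real and M :: nat and s :: "nat \<Rightarrow> 'a"
  assumes "finite V"
    and "metric_weights V w"
    and "normalized V g" and "monotone_set_fun V g" and "submodular V g"
    and "B \<ge> 0"
    and "\<forall>i<M. s i \<in> V"
    and "inj_on s {..<M}"
  shows "\<exists>Q. mop_optimal V w g B M s Q \<and>
           (\<forall>i<M. \<forall>j<M. i \<noteq> j \<longrightarrow> set (Q i) \<inter> set (Q j) = {})"
proof -
  define L where "L = {xs. set xs \<subseteq> V \<and> distinct xs}"
  define F where "F = {Q. mop_feasible V w B M s Q} \<inter> extensional {..<M}"
  have finL: "finite L" unfolding L_def using finite_subset_distinct[OF assms(1)] .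
  have "F \<subseteq> PiE {..<M} (\<lambda>_. L)"
    unfolding F_def L_def PiE_def mop_feasible_def is_path_def by auto
  then have finF: "finite F" using finite_PiE[of "{..<M}" "\<lambda>_. L"] finL
    by (meson finite_lessThan finite_subset)
  define Q1 where "Q1 = restrict (\<lambda>i. [s i]) {..<M}"
  have "Q1 \<in> F" unfolding F_def Q1_def mop_feasible_def is_path_def using assms(6,7) by auto
  then have ne: "F \<noteq> {}" by auto
  have "Max (team_reward g M ` F) \<in> team_reward g M ` F" using finF ne by (intro Max_in) auto
  then obtain Q0 where Q0F: "Q0 \<in> F" and Q0eq: "team_reward g M Q0 = Max (team_reward g M ` F)" by auto
  have Q0max: "\<forall>Q\<in>F. team_reward g M Q \<le> team_reward g M Q0"
    using finF Q0eq by (simp add: Max_ge)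
  have feas0: "mop_feasible V w B M s Q0" using Q0F F_def by auto
  have opt0: "team_reward g M Q' \<le> team_reward g M Q0" if "mop_feasible V w B M s Q'" for Q'
  proof -
    have "restrict Q' {..<M} \<in> F" using that unfolding F_def mop_feasible_def by auto
    then have "team_reward g M (restrict Q' {..<M}) \<le> team_reward g M Q0" using Q0max by blast
    moreover have "team_reward g M (restrict Q' {..<M}) = team_reward g M Q'"
      unfolding team_reward_def by (metis (no_types, lifting) SUP_cong lessThan_iff restrict_apply')
    ultimately show ?thesis by simp
  qed
  define own where "own v = (if \<exists>k<M. s k = v then (THE k. k<M \<and> s k = v)
      else (LEAST i. i<M \<and> v \<in> set (Q0 i)))" for v
  have own_s: "own (s i) = i" if "i < M" for i
  proof -
    have "(THE k. k<M \<and> s k = s i) = i"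
      using that assms(8) by (intro the_equality) (auto dest: inj_onD)
    then show ?thesis unfolding own_def using that by auto
  qed
  have own_in: "v \<in> set (Q0 (own v)) \<and> own v < M" if "i < M" "v \<in> set (Q0 i)" for i v
  proof (cases "\<exists>k<M. s k = v")
    case True
    then obtain k where k: "k < M" "s k = v" by auto
    then have "own v = k" using own_s by auto
    moreover have "s k \<in> set (Q0 k)" using feas0 k unfolding mop_feasible_def is_path_def
      by (metis hd_in_set)
    ultimately show ?thesis using k by simp
  next
    case False
    then have "own v = (LEAST i. i<M \<and> v \<in> set (Q0 i))" unfolding own_def by (simp only: if_False)
    then show ?thesis using LeastI[of "\<lambda>i. i<M \<and> v \<in> set (Q0 i)" i] that by simp
  qed
  define Q where "Q i = filter (\<lambda>v. own v = i) (Q0 i)" for i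
  have Qform: "Q0 i = s i # tl (Q0 i)" if "i < M" for i
    using feas0 that unfolding mop_feasible_def is_path_def by (metis list.collapse)
  have feas: "mop_feasible V w B M s Q"
    unfolding mop_feasible_def
  proof (intro allI impI)
    fix i assume i: "i < M"
    have "Q i = filter (\<lambda>v. own v = i) (s i # tl (Q0 i))"
      unfolding Q_def using Qform[OF i] by metis
    then have Qi: "Q i = s i # filter (\<lambda>v. own v = i) (tl (Q0 i))"
      using own_s[OF i] by simp
    have p0: "is_path V (Q0 i)" "path_cost w (Q0 i) \<le> B" using feas0 i unfolding mop_feasible_def by auto
    have "path_cost w (Q i) \<le> path_cost w (Q0 i)"
      unfolding Qi apply (subst (2) Qform[OF i])
      apply (rule pc_filter[OF assms(2)])
      using p0 assms(7) i unfolding is_path_def by (auto dest: list.set_sel(2))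
    moreover have "is_path V (Q i)"
    proof -
      have "Q i \<noteq> []" using Qi by simp
      moreover have "distinct (Q i) \<and> set (Q i) \<subseteq> V" using p0 unfolding Q_def is_path_def by auto
      ultimately show ?thesis unfolding is_path_def by simp
    qed
    ultimately show "is_path V (Q i) \<and> hd (Q i) = s i \<and> path_cost w (Q i) \<le> B"
      using p0 Qi by simp
  qed
  have un: "(\<Union>i<M. set (Q i)) = (\<Union>i<M. set (Q0 i))"
  proof
    show "(\<Union>i<M. set (Q i)) \<subseteq> (\<Union>i<M. set (Q0 i))" unfolding Q_def by auto
    show "(\<Union>i<M. set (Q0 i)) \<subseteq> (\<Union>i<M. set (Q i))"
    proof
      fix v assume "v \<in> (\<Union>i<M. set (Q0 i))"
      then obtain i where "i < M" "v \<in> set (Q0 i)" by auto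
      then have "v \<in> set (Q (own v)) \<and> own v < M" using own_in unfolding Q_def by auto
      then show "v \<in> (\<Union>i<M. set (Q i))" by auto
    qed
  qed
  have "mop_optimal V w g B M s Q"
    unfolding mop_optimal_def using feas opt0 un unfolding team_reward_def by auto
  moreover have "\<forall>i<M. \<forall>j<M. i \<noteq> j \<longrightarrow> set (Q i) \<inter> set (Q j) = {}"
    unfolding Q_def by auto
  ultimately show ?thesis by blast
qed

end
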